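(* Let $\mathcal M$ be a closed subspace of $H^2_p$ with $S^*\mathcal M\subset\mathcal M$ and $\ker S^*\subset\mathcal M$. Then $R_{\mathcal M}=S^*P_{\mathcal M}S$, $R_{\mathcal M}S^*=S^*P_{\mathcal M}$, and $Q_{\mathcal M}=P_{\mathcal M}S$.
   Context: $S$ is the forward shift on $H^2_p$; $P_{\mathcal M}$ is the orthogonal projection of $H^2_p$ onto $\mathcal M$; $R_{\mathcal M}$ is the orthogonal projection of $H^2_p$ onto $S^*\mathcal M$; $Q_{\mathcal M}=SR_{\mathcal M}$. *)

theory Defs
  imports "HOL-Analysis.Analysis"
begin

text \<open>Model of the vector-valued Hardy space H^2_p: via Taylor coefficients,
  H^2_p is identified with square-summable sequences in C^p, i.e. functions
  nat => complex^'p (the index type 'p has p elements) with summable squared norms.\<close>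

type_synonym 'p h2seq = "nat \<Rightarrow> complex ^ 'p"

definition H2 :: "('p::finite) h2seq set" where
  "H2 = {f. summable (\<lambda>n. (norm (f n))\<^sup>2)}"

definition h2_inner :: "('p::finite) h2seq \<Rightarrow> 'p h2seq \<Rightarrow> complex" where
  "h2_inner f g = (\<Sum>n. \<Sum>i\<in>UNIV. f n $ i * cnj (g n $ i))"

definition h2_norm :: "('p::finite) h2seq \<Rightarrow> real" where
  "h2_norm f = sqrt (\<Sum>n. (norm (f n))\<^sup>2)"

definition h2_closed_subspace :: "('p::finite) h2seq set \<Rightarrow> bool" where
  "h2_closed_subspace M \<longleftrightarrow>
     M \<subseteq> H2 \<and> (\<lambda>n. 0) \<in> M \<and>
     (\<forall>f\<in>M. \<forall>g\<in>M. (\<lambda>n. f n + g n) \<in> M) \<and>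
     (\<forall>c::complex. \<forall>f\<in>M. (\<lambda>n. c *s f n) \<in> M) \<and>
     (\<forall>x f. (\<forall>k. x k \<in> M) \<and> f \<in> H2 \<and>
            ((\<lambda>k. h2_norm (\<lambda>n. x k n - f n)) \<longlonglongrightarrow> 0) \<longrightarrow> f \<in> M)"

text \<open>Forward shift (multiplication by z) and backward shift (its adjoint).\<close>
definition shift :: "('p::finite) h2seq \<Rightarrow> 'p h2seq" where
  "shift f = (\<lambda>n. if n = 0 then 0 else f (n - 1))"

definition bshift :: "('p::finite) h2seq \<Rightarrow> 'p h2seq" where
  "bshift f = (\<lambda>n. f (Suc n))"

definition ker_bshift :: "('p::finite) h2seq set" where
  "ker_bshift = {f \<in> H2. bshift f = (\<lambda>n. 0)}"

definition oproj :: "('p::finite) h2seq set \<Rightarrow> 'p h2seq \<Rightarrow> 'p h2seq" where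
  "oproj N f = (THE g. g \<in> N \<and> (\<forall>h\<in>N. h2_inner (\<lambda>n. f n - g n) h = 0))"

definition P_M :: "('p::finite) h2seq set \<Rightarrow> 'p h2seq \<Rightarrow> 'p h2seq" where
  "P_M M = oproj M"

definition R_M :: "('p::finite) h2seq set \<Rightarrow> 'p h2seq \<Rightarrow> 'p h2seq" where
  "R_M M = oproj (bshift ` M)"

definition Q_M :: "('p::finite) h2seq set \<Rightarrow> 'p h2seq \<Rightarrow> 'p h2seq" where
  "Q_M M = (\<lambda>f. shift (R_M M f))"

end

theory Submission
  imports Defs
begin

abbreviation vi :: "complex^'p::finite \<Rightarrow> complex^'p \<Rightarrow> complex" where
  "vi x y \<equiv> (\<Sum>i\<in>UNIV. x $ i * cnj (y $ i))"

lemma vnorm_sq: "(norm (x::complex^'p::finite))\<^sup>2 = (\<Sum>i\<in>UNIV. (norm (x$i))\<^sup>2)"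
  unfolding norm_vec_def L2_set_def by (simp add: sum_nonneg)

lemma vi_self: "vi x x = of_real ((norm x)\<^sup>2)"
  unfolding vnorm_sq of_real_sum complex_norm_square by simp

lemma vi_norm_le: "norm (vi x y) \<le> ((norm x)\<^sup>2 + (norm y)\<^sup>2) / 2"
proof -
  have "norm (vi x y) \<le> (\<Sum>i\<in>UNIV. norm (x $ i * cnj (y $ i)))" by (rule norm_sum)
  also have "\<dots> \<le> (\<Sum>i\<in>UNIV. ((norm (x$i))\<^sup>2 + (norm (y$i))\<^sup>2)/2)"
  proof (rule sum_mono)
    fix i
    have "0 \<le> (norm (x$i) - norm (y$i))\<^sup>2" by simp
    then show "norm (x $ i * cnj (y $ i)) \<le> ((norm (x$i))\<^sup>2 + (norm (y$i))\<^sup>2)/2"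
      by (simp add: norm_mult power2_eq_square algebra_simps)
  qed
  also have "\<dots> = ((norm x)\<^sup>2 + (norm y)\<^sup>2) / 2"
    unfolding vnorm_sq sum_divide_distrib[symmetric] sum.distrib ..
  finally show ?thesis .
qed

lemma Re_vi: "Re (vi x y) = x \<bullet> y"
  by (simp add: inner_vec_def inner_complex_def Re_sum)

lemma vi_ii: "vi x (\<i> *s y) = - \<i> * vi x y"
  by (simp add: sum_distrib_left algebra_simps)

lemma inner_le_half: "\<bar>(x::'a::real_inner) \<bullet> y\<bar> \<le> ((norm x)\<^sup>2 + (norm y)\<^sup>2) / 2"
proof -
  have "\<bar>x \<bullet> y\<bar> \<le> norm x * norm y" by (rule Cauchy_Schwarz_ineq2)
  moreover have "0 \<le> (norm x - norm y)\<^sup>2" by simp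
  ultimately show ?thesis by (simp add: power2_eq_square algebra_simps)
qed

lemma H2_iff: "f \<in> H2 \<longleftrightarrow> summable (\<lambda>n. (norm (f n))\<^sup>2)"
  by (simp add: H2_def)

lemma sq_add_le: "(norm ((a::'a::real_normed_vector) + b))\<^sup>2 \<le> 2 * (norm a)\<^sup>2 + 2 * (norm b)\<^sup>2"
proof -
  have "norm (a+b) \<le> norm a + norm b" by (rule norm_triangle_ineq)
  hence "(norm (a+b))\<^sup>2 \<le> (norm a + norm b)\<^sup>2" by (simp add: power_mono)
  moreover have "0 \<le> (norm a - norm b)\<^sup>2" by simp
  ultimately show ?thesis by (simp add: power2_eq_square algebra_simps)
qed

lemma H2_add: "f \<in> H2 \<Longrightarrow> g \<in> H2 \<Longrightarrow> (\<lambda>n. f n + g n) \<in> H2"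
  unfolding H2_iff
  by (rule summable_comparison_test[where g="\<lambda>n. 2 * (norm (f n))\<^sup>2 + 2 * (norm (g n))\<^sup>2"])
     (auto intro!: summable_add summable_mult sq_add_le)

lemma H2_diff: "f \<in> H2 \<Longrightarrow> g \<in> H2 \<Longrightarrow> (\<lambda>n. f n - g n) \<in> H2"
  unfolding H2_iff
  by (rule summable_comparison_test[where g="\<lambda>n. 2 * (norm (f n))\<^sup>2 + 2 * (norm (g n))\<^sup>2"])
     (auto intro!: summable_add summable_mult simp: sq_add_le[of "f n" "- g n" for n, simplified])

lemma H2_shift: "f \<in> H2 \<Longrightarrow> shift f \<in> H2"
proof -
  assume "f \<in> H2"
  hence s: "summable (\<lambda>n. (norm (f n))\<^sup>2)" by (simp add: H2_iff)
  have "summable (\<lambda>n. (norm (shift f (Suc n)))\<^sup>2)" using s by (simp add: shift_def)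
  thus ?thesis using summable_Suc_iff[of "\<lambda>n. (norm (shift f n))\<^sup>2"] by (simp add: H2_iff)
qed

lemma H2_bshift: "f \<in> H2 \<Longrightarrow> bshift f \<in> H2"
  using summable_Suc_iff[of "\<lambda>n. (norm (f n))\<^sup>2"] by (simp add: H2_iff bshift_def)

lemma summable_inner: "f \<in> H2 \<Longrightarrow> g \<in> H2 \<Longrightarrow> summable (\<lambda>n. f n \<bullet> g n)"
  unfolding H2_iff
  by (rule summable_comparison_test'[where g="\<lambda>n. ((norm (f n))\<^sup>2 + (norm (g n))\<^sup>2)/2" and N=0])
     (auto intro!: summable_add summable_divide simp: inner_le_half[simplified])

lemma summable_vi: "f \<in> H2 \<Longrightarrow> g \<in> H2 \<Longrightarrow> summable (\<lambda>n. vi (f n) (g n))"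
  unfolding H2_iff
  by (rule summable_comparison_test'[where g="\<lambda>n. ((norm (f n))\<^sup>2 + (norm (g n))\<^sup>2)/2" and N=0])
     (auto intro!: summable_add summable_divide vi_norm_le[simplified])

definition nsq :: "('p::finite) h2seq \<Rightarrow> real" where
  "nsq f = (\<Sum>n. (norm (f n))\<^sup>2)"

definition RI :: "('p::finite) h2seq \<Rightarrow> 'p h2seq \<Rightarrow> real" where
  "RI f g = (\<Sum>n. f n \<bullet> g n)"

lemma h2_norm_nsq: "h2_norm f = sqrt (nsq f)"
  by (simp add: h2_norm_def nsq_def)

lemma nsq_nonneg: "f \<in> H2 \<Longrightarrow> 0 \<le> nsq f"
  unfolding nsq_def H2_iff by (rule suminf_nonneg) auto

lemma H2_scaleR: "f \<in> H2 \<Longrightarrow> (\<lambda>n. t *\<^sub>R f n) \<in> H2"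
  unfolding H2_iff by (simp add: power_mult_distrib summable_mult)

lemma nsq_add: assumes "a \<in> H2" "b \<in> H2"
  shows "nsq (\<lambda>n. a n + b n) = nsq a + 2 * RI a b + nsq b"
proof -
  have "nsq (\<lambda>n. a n + b n) = (\<Sum>n. ((norm (a n))\<^sup>2 + 2 * (a n \<bullet> b n)) + (norm (b n))\<^sup>2)"
    unfolding nsq_def
    by (simp add: power2_norm_eq_inner inner_add_left inner_add_right inner_commute algebra_simps)
  also have "\<dots> = nsq a + 2 * RI a b + nsq b"
  proof -
    have s: "summable (\<lambda>n. (norm (a n))\<^sup>2)" "summable (\<lambda>n. (norm (b n))\<^sup>2)" "summable (\<lambda>n. a n \<bullet> b n)"
      using assms summable_inner[OF assms] by (auto simp: H2_iff)
    have e1: "(\<Sum>n. (norm (a n))\<^sup>2 + 2 * (a n \<bullet> b n)) = (\<Sum>n. (norm (a n))\<^sup>2) + 2 * (\<Sum>n. a n \<bullet> b n)"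
      using s by (simp add: suminf_add[symmetric] suminf_mult summable_mult)
    show ?thesis unfolding nsq_def RI_def
      using s e1 by (subst suminf_add[symmetric]) (auto intro!: summable_add summable_mult)
  qed
  finally show ?thesis .
qed

lemma nsq_diff: assumes "a \<in> H2" "b \<in> H2"
  shows "nsq (\<lambda>n. a n - b n) = nsq a - 2 * RI a b + nsq b"
proof -
  have "nsq (\<lambda>n. a n - b n) = (\<Sum>n. ((norm (a n))\<^sup>2 - 2 * (a n \<bullet> b n)) + (norm (b n))\<^sup>2)"
    unfolding nsq_def
    by (simp add: power2_norm_eq_inner inner_diff_left inner_diff_right inner_commute algebra_simps)
  also have "\<dots> = nsq a - 2 * RI a b + nsq b"
  proof -
    have s: "summable (\<lambda>n. (norm (a n))\<^sup>2)" "summable (\<lambda>n. (norm (b n))\<^sup>2)" "summable (\<lambda>n. a n \<bullet> b n)"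
      using assms summable_inner[OF assms] by (auto simp: H2_iff)
    have e1: "(\<Sum>n. (norm (a n))\<^sup>2 - 2 * (a n \<bullet> b n)) = (\<Sum>n. (norm (a n))\<^sup>2) - 2 * (\<Sum>n. a n \<bullet> b n)"
      using s by (simp add: suminf_diff[symmetric] suminf_mult summable_mult)
    show ?thesis unfolding nsq_def RI_def
      using s e1 by (subst suminf_add[symmetric]) (auto intro!: summable_diff summable_mult)
  qed
  finally show ?thesis .
qed

lemma nsq_scaleR: "b \<in> H2 \<Longrightarrow> nsq (\<lambda>n. t *\<^sub>R b n) = t\<^sup>2 * nsq b"
  unfolding nsq_def H2_iff by (simp add: power_mult_distrib suminf_mult)

lemma RI_scaleR: "a \<in> H2 \<Longrightarrow> b \<in> H2 \<Longrightarrow> RI a (\<lambda>n. t *\<^sub>R b n) = t * RI a b"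
  unfolding RI_def by (simp add: suminf_mult summable_inner)

lemma quad_lemma:
  fixes A B C :: real
  assumes C: "C \<ge> 0" and q: "\<And>t. 0 \<le> A - 2*t*B + t\<^sup>2*C"
  shows "B\<^sup>2 \<le> A*C"
proof (cases "C = 0")
  case True
  show ?thesis
  proof (rule ccontr)
    assume "\<not> ?thesis"
    hence "B \<noteq> 0" using True by auto
    have "0 \<le> A - 2*((A+1)/(2*B))*B" using q[of "(A+1)/(2*B)"] True by simp
    also have "\<dots> = -1" using \<open>B \<noteq> 0\<close> by (simp add: field_simps)
    finally show False by simp
  qed
next
  case False
  hence Cp: "C > 0" using C by simp
  have "0 \<le> A - 2*(B/C)*B + (B/C)\<^sup>2*C" by (rule q)
  also have "\<dots> = (A*C - B\<^sup>2)/C" using Cp by (simp add: field_simps power2_eq_square)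
  finally show ?thesis using Cp by (simp add: divide_nonneg_pos zero_le_divide_iff)
qed

lemma RI_CS: assumes "a \<in> H2" "b \<in> H2" shows "(RI a b)\<^sup>2 \<le> nsq a * nsq b"
proof (rule quad_lemma)
  show "0 \<le> nsq b" using assms by (simp add: nsq_nonneg)
  fix t
  have "0 \<le> nsq (\<lambda>n. a n - t *\<^sub>R b n)"
    by (rule nsq_nonneg, rule H2_diff, fact, rule H2_scaleR, fact)
  also have "\<dots> = nsq a - 2 * t * RI a b + t\<^sup>2 * nsq b"
    using assms by (simp add: nsq_diff H2_scaleR RI_scaleR nsq_scaleR)
  finally show "0 \<le> nsq a - 2 * t * RI a b + t\<^sup>2 * nsq b" .
qed

lemma h2_triangle: assumes "a \<in> H2" "b \<in> H2"
  shows "h2_norm (\<lambda>n. a n + b n) \<le> h2_norm a + h2_norm b"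
proof -
  have A: "0 \<le> nsq a" "0 \<le> nsq b" using assms by (auto simp: nsq_nonneg)
  have "RI a b \<le> sqrt (nsq a * nsq b)"
    by (rule real_le_rsqrt, rule RI_CS[OF assms])
  hence r: "RI a b \<le> sqrt (nsq a) * sqrt (nsq b)" by (simp add: real_sqrt_mult)
  have "nsq (\<lambda>n. a n + b n) \<le> (sqrt (nsq a) + sqrt (nsq b))\<^sup>2"
    using r A by (simp add: nsq_add[OF assms] power2_eq_square algebra_simps)
  thus ?thesis unfolding h2_norm_nsq
    by (intro real_le_lsqrt) (auto simp: A)
qed

lemma term_le_nsq: "f \<in> H2 \<Longrightarrow> (norm (f n))\<^sup>2 \<le> nsq f"
  unfolding nsq_def H2_iff using sum_le_suminf[of "\<lambda>n. (norm (f n))\<^sup>2" "{n}"] by auto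

lemma partial_le_nsq: "f \<in> H2 \<Longrightarrow> (\<Sum>n<N. (norm (f n))\<^sup>2) \<le> nsq f"
  unfolding nsq_def H2_iff using sum_le_suminf[of "\<lambda>n. (norm (f n))\<^sup>2" "{..<N}"] by auto

lemma h2_complete:
  assumes x: "\<And>k. x k \<in> H2"
    and C: "\<And>e. e > 0 \<Longrightarrow> \<exists>K. \<forall>j\<ge>K. \<forall>k\<ge>K. nsq (\<lambda>n. x j n - x k n) < e"
  shows "\<exists>g\<in>H2. (\<lambda>k. h2_norm (\<lambda>n. x k n - g n)) \<longlonglongrightarrow> 0"
proof -
  have xd: "\<And>j k. (\<lambda>n. x j n - x k n) \<in> H2" using x by (simp add: H2_diff)
  have cauchy: "Cauchy (\<lambda>k. x k n)" for n
  proof (rule metric_CauchyI)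
    fix e :: real assume "e > 0"
    then obtain K where K: "\<forall>j\<ge>K. \<forall>k\<ge>K. nsq (\<lambda>n. x j n - x k n) < e\<^sup>2"
      using C[of "e\<^sup>2"] by auto
    show "\<exists>M. \<forall>m\<ge>M. \<forall>n'\<ge>M. dist (x m n) (x n' n) < e"
    proof (intro exI allI impI)
      fix m n' assume "K \<le> m" "K \<le> n'"
      have "(norm (x m n - x n' n))\<^sup>2 \<le> nsq (\<lambda>n. x m n - x n' n)"
        using term_le_nsq[OF xd[of m n'], of n] by simp
      also have "\<dots> < e\<^sup>2" using K \<open>K \<le> m\<close> \<open>K \<le> n'\<close> by auto
      finally show "dist (x m n) (x n' n) < e"
        using \<open>e > 0\<close> by (simp add: dist_norm power2_less_imp_less)
    qed
  qed
  define g where "g n = lim (\<lambda>k. x k n)" for n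
  have lim: "(\<lambda>k. x k n) \<longlonglongrightarrow> g n" for n
    using cauchy[of n] unfolding g_def by (simp add: Cauchy_convergent_iff convergent_LIMSEQ_iff)
  have bound: "\<exists>K. \<forall>k\<ge>K. summable (\<lambda>n. (norm (x k n - g n))\<^sup>2) \<and> nsq (\<lambda>n. x k n - g n) \<le> e"
    if "e > 0" for e
  proof -
    obtain K where K: "\<forall>j\<ge>K. \<forall>k\<ge>K. nsq (\<lambda>n. x j n - x k n) < e"
      using C[OF \<open>e > 0\<close>] by auto
    have part: "(\<Sum>n<N. (norm (x k n - g n))\<^sup>2) \<le> e" if "k \<ge> K" for k N
    proof (rule LIMSEQ_le_const2)
      show "(\<lambda>j. \<Sum>n<N. (norm (x k n - x j n))\<^sup>2) \<longlonglongrightarrow> (\<Sum>n<N. (norm (x k n - g n))\<^sup>2)"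
        by (intro tendsto_intros lim)
      show "\<exists>M. \<forall>j\<ge>M. (\<Sum>n<N. (norm (x k n - x j n))\<^sup>2) \<le> e"
      proof (intro exI allI impI)
        fix j assume "K \<le> j"
        have "(\<Sum>n<N. (norm (x k n - x j n))\<^sup>2) \<le> nsq (\<lambda>n. x k n - x j n)"
          using partial_le_nsq[OF xd[of k j], of N] by simp
        also have "\<dots> < e" using K \<open>K \<le> j\<close> that by auto
        finally show "(\<Sum>n<N. (norm (x k n - x j n))\<^sup>2) \<le> e" by simp
      qed
    qed
    show ?thesis
    proof (intro exI allI impI conjI)
      fix k assume "K \<le> k"
      show sk: "summable (\<lambda>n. (norm (x k n - g n))\<^sup>2)"
        by (rule summableI_nonneg_bounded[where x=e]) (use part \<open>K \<le> k\<close> in auto)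
      show "nsq (\<lambda>n. x k n - g n) \<le> e" unfolding nsq_def
        by (rule suminf_le_const[OF sk]) (use part \<open>K \<le> k\<close> in auto)
    qed
  qed
  obtain K1 where K1: "\<forall>k\<ge>K1. summable (\<lambda>n. (norm (x k n - g n))\<^sup>2)"
    using bound[of 1] by auto
  have "(\<lambda>n. x K1 n - (x K1 n - g n)) \<in> H2"
    by (rule H2_diff[OF x]) (use K1 in \<open>auto simp: H2_iff\<close>)
  hence gH: "g \<in> H2" by simp
  have "(\<lambda>k. h2_norm (\<lambda>n. x k n - g n)) \<longlonglongrightarrow> 0"
  proof (rule LIMSEQ_I)
    fix r :: real assume "r > 0"
    then obtain K where K: "\<forall>k\<ge>K. summable (\<lambda>n. (norm (x k n - g n))\<^sup>2) \<and> nsq (\<lambda>n. x k n - g n) \<le> (r/2)\<^sup>2"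
      using bound[of "(r/2)\<^sup>2"] by auto
    show "\<exists>no. \<forall>k\<ge>no. norm (h2_norm (\<lambda>n. x k n - g n) - 0) < r"
    proof (intro exI allI impI)
      fix k assume "K \<le> k"
      have nn: "0 \<le> nsq (\<lambda>n. x k n - g n)" using K \<open>K \<le> k\<close> by (intro nsq_nonneg) (auto simp: H2_iff)
      have "sqrt (nsq (\<lambda>n. x k n - g n)) \<le> sqrt ((r/2)\<^sup>2)"
        using K \<open>K \<le> k\<close> by (intro real_sqrt_le_mono) auto
      also have "\<dots> = r/2" using \<open>r > 0\<close> by simp
      finally show "norm (h2_norm (\<lambda>n. x k n - g n) - 0) < r"
        using nn \<open>r > 0\<close> by (simp add: h2_norm_nsq)
    qed
  qed
  with gH show ?thesis by blast
qed

lemma Re_h2_inner: "u \<in> H2 \<Longrightarrow> h \<in> H2 \<Longrightarrow> Re (h2_inner u h) = RI u h"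
  unfolding h2_inner_def RI_def by (simp add: Re_suminf summable_vi Re_vi del: Re_sum)

lemma h2_inner_ii: "u \<in> H2 \<Longrightarrow> h \<in> H2 \<Longrightarrow> h2_inner u (\<lambda>n. \<i> *s h n) = - \<i> * h2_inner u h"
proof -
  assume a: "u \<in> H2" "h \<in> H2"
  have "(\<lambda>n. vi (u n) (\<i> *s h n)) = (\<lambda>n. (- \<i>) * vi (u n) (h n))"
    by (intro ext) (rule vi_ii)
  thus ?thesis unfolding h2_inner_def using suminf_mult[OF summable_vi[OF a], of "- \<i>"] by simp
qed

lemma orth_from_RI:
  assumes u: "u \<in> H2" and h: "h \<in> H2" "(\<lambda>n. \<i> *s h n) \<in> H2"
    and r1: "RI u h = 0" and r2: "RI u (\<lambda>n. \<i> *s h n) = 0"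
  shows "h2_inner u h = 0"
proof -
  have "Re (h2_inner u h) = 0" using r1 Re_h2_inner[OF u h(1)] by simp
  moreover have "Re (h2_inner u (\<lambda>n. \<i> *s h n)) = 0" using r2 Re_h2_inner[OF u h(2)] by simp
  hence "Im (h2_inner u h) = 0" using h2_inner_ii[OF u h(1)] by simp
  ultimately show ?thesis by (simp add: complex_eq_iff)
qed

lemma scaleR_smult: "t *\<^sub>R (v::complex^'p::finite) = of_real t *s v"
  by (auto simp: vec_eq_iff scaleR_conv_of_real[where 'a=complex])

lemma proj_exists:
  assumes M: "h2_closed_subspace M" and f: "f \<in> H2"
  shows "\<exists>g\<in>M. \<forall>h\<in>M. h2_inner (\<lambda>n. f n - g n) h = 0"
proof -
  have MH: "M \<subseteq> H2" and zero: "(\<lambda>n. 0) \<in> M"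
    and add: "\<And>a b. a \<in> M \<Longrightarrow> b \<in> M \<Longrightarrow> (\<lambda>n. a n + b n) \<in> M"
    and scal: "\<And>c a. a \<in> M \<Longrightarrow> (\<lambda>n. c *s a n) \<in> M"
    and clos: "\<And>x g. (\<forall>k. x k \<in> M) \<Longrightarrow> g \<in> H2 \<Longrightarrow> ((\<lambda>k. h2_norm (\<lambda>n. x k n - g n)) \<longlonglongrightarrow> 0) \<Longrightarrow> g \<in> M"
    using M unfolding h2_closed_subspace_def by blast+
  have scalR: "(\<lambda>n. t *\<^sub>R a n) \<in> M" if "a \<in> M" for t a
    using scal[OF that, of "of_real t"] by (simp add: scaleR_smult)
  have fd: "(\<lambda>n. f n - a n) \<in> H2" if "a \<in> M" for a using MH that f by (auto intro: H2_diff)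
  define D where "D = (\<lambda>g. nsq (\<lambda>n. f n - g n)) ` M"
  define d where "d = Inf D"
  have Dne: "D \<noteq> {}" using zero by (auto simp: D_def)
  have Dbdd: "bdd_below D" unfolding D_def bdd_below_def
    by (rule exI[of _ 0]) (auto intro!: nsq_nonneg fd)
  have dle: "d \<le> nsq (\<lambda>n. f n - a n)" if "a \<in> M" for a
    unfolding d_def D_def using Dbdd that by (auto intro!: cInf_lower simp: D_def)
  have d0: "0 \<le> d" using dle[OF zero] zero
    unfolding d_def using Dne Dbdd by (auto intro!: cInf_greatest nsq_nonneg fd simp: D_def)
  have "\<forall>k. \<exists>a. a \<in> M \<and> nsq (\<lambda>n. f n - a n) < d + inverse (real (Suc k))"
  proof
    fix k
    have "Inf D < d + inverse (real (Suc k))" unfolding d_def by simp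
    then obtain y where "y \<in> D" "y < d + inverse (real (Suc k))" using cInf_lessD[OF Dne] by blast
    thus "\<exists>a. a \<in> M \<and> nsq (\<lambda>n. f n - a n) < d + inverse (real (Suc k))" by (auto simp: D_def)
  qed
  then obtain gs where gsM: "\<And>k. gs k \<in> M"
    and gsd: "\<And>k. nsq (\<lambda>n. f n - gs k n) < d + inverse (real (Suc k))"
    by metis
  have gsH: "gs k \<in> H2" for k using gsM MH by auto
  have cauchy_bound: "nsq (\<lambda>n. gs j n - gs k n) \<le> 2 * inverse (real (Suc j)) + 2 * inverse (real (Suc k))" for j k
  proof -
    define a where "a = (\<lambda>n. f n - gs j n)"
    define b where "b = (\<lambda>n. f n - gs k n)"
    have aH: "a \<in> H2" and bH: "b \<in> H2" unfolding a_def b_def by (auto intro: fd gsM)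
    define m where "m = (\<lambda>n. (1/2) *\<^sub>R (gs j n + gs k n))"
    have mM: "m \<in> M" unfolding m_def by (intro scalR add gsM)
    have e1: "(\<lambda>n. a n - b n) = (\<lambda>n. gs k n - gs j n)" unfolding a_def b_def by auto
    have e2: "(\<lambda>n. a n + b n) = (\<lambda>n. 2 *\<^sub>R (f n - m n))" unfolding a_def b_def m_def
      by (auto simp: algebra_simps scaleR_2)
    have "nsq (\<lambda>n. a n + b n) = 4 * nsq (\<lambda>n. f n - m n)"
      unfolding e2 using nsq_scaleR[OF fd[OF mM], of 2] by simp
    hence "nsq (\<lambda>n. a n + b n) \<ge> 4 * d" using dle[OF mM] by simp
    moreover have "nsq (\<lambda>n. a n - b n) + nsq (\<lambda>n. a n + b n) = 2 * nsq a + 2 * nsq b"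
      using nsq_add[OF aH bH] nsq_diff[OF aH bH] by simp
    moreover have "nsq a < d + inverse (real (Suc j))" "nsq b < d + inverse (real (Suc k))"
      using gsd unfolding a_def b_def by auto
    moreover have "nsq (\<lambda>n. a n - b n) = nsq (\<lambda>n. gs j n - gs k n)"
      unfolding e1 using nsq_scaleR[of "\<lambda>n. gs k n - gs j n" "-1"]
      by (simp add: H2_diff gsH algebra_simps)
    ultimately show ?thesis by simp
  qed
  have "\<exists>g\<in>H2. (\<lambda>k. h2_norm (\<lambda>n. gs k n - g n)) \<longlonglongrightarrow> 0"
  proof (rule h2_complete[OF gsH])
    fix e :: real assume "e > 0"
    obtain K :: nat where K: "4 / e < real K" using reals_Archimedean2 by blast
    have "4 / real (Suc K) < e" using K \<open>e > 0\<close>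
      by (simp add: field_simps)
    show "\<exists>K. \<forall>j\<ge>K. \<forall>k\<ge>K. nsq (\<lambda>n. gs j n - gs k n) < e"
    proof (intro exI allI impI)
      fix j k assume "K \<le> j" "K \<le> k"
      have "inverse (real (Suc j)) \<le> inverse (real (Suc K))" "inverse (real (Suc k)) \<le> inverse (real (Suc K))"
        using \<open>K \<le> j\<close> \<open>K \<le> k\<close> by (auto intro!: le_imp_inverse_le)
      hence "nsq (\<lambda>n. gs j n - gs k n) \<le> 2 * inverse (real (Suc K)) + 2 * inverse (real (Suc K))"
        using cauchy_bound[of j k] by linarith
      also have "\<dots> = 4 / real (Suc K)" by (simp add: divide_inverse)
      finally have "nsq (\<lambda>n. gs j n - gs k n) \<le> 4 / real (Suc K)" .
      with \<open>4 / real (Suc K) < e\<close> show "nsq (\<lambda>n. gs j n - gs k n) < e" by simp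
    qed
  qed
  then obtain g where gH: "g \<in> H2" and glim: "(\<lambda>k. h2_norm (\<lambda>n. gs k n - g n)) \<longlonglongrightarrow> 0" by blast
  have gM: "g \<in> M" by (rule clos[OF _ gH glim]) (use gsM in auto)
  have "h2_norm (\<lambda>n. f n - g n) \<le> sqrt d"
  proof (rule LIMSEQ_le_const)
    have "(\<lambda>k. sqrt (d + inverse (real (Suc k))) + h2_norm (\<lambda>n. gs k n - g n)) \<longlonglongrightarrow> sqrt (d + 0) + 0"
      by (intro tendsto_intros glim LIMSEQ_inverse_real_of_nat)
    thus "(\<lambda>k. sqrt (d + inverse (real (Suc k))) + h2_norm (\<lambda>n. gs k n - g n)) \<longlonglongrightarrow> sqrt d"
      by simp
    show "\<exists>N. \<forall>k\<ge>N. h2_norm (\<lambda>n. f n - g n) \<le> sqrt (d + inverse (real (Suc k))) + h2_norm (\<lambda>n. gs k n - g n)"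
    proof (intro exI allI impI)
      fix k :: nat
      have "h2_norm (\<lambda>n. (f n - gs k n) + (gs k n - g n)) \<le> h2_norm (\<lambda>n. f n - gs k n) + h2_norm (\<lambda>n. gs k n - g n)"
        by (rule h2_triangle) (auto intro: fd gsM H2_diff gsH gH)
      moreover have "h2_norm (\<lambda>n. f n - gs k n) \<le> sqrt (d + inverse (real (Suc k)))"
        unfolding h2_norm_nsq using gsd[of k] by (simp add: less_imp_le)
      ultimately show "h2_norm (\<lambda>n. f n - g n) \<le> sqrt (d + inverse (real (Suc k))) + h2_norm (\<lambda>n. gs k n - g n)"
        by simp
    qed
  qed
  hence "nsq (\<lambda>n. f n - g n) \<le> d"
    using d0 nsq_nonneg[OF fd[OF gM]] unfolding h2_norm_nsq by simp
  hence gmin: "nsq (\<lambda>n. f n - g n) \<le> nsq (\<lambda>n. f n - a n)" if "a \<in> M" for a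
    using dle[OF that] by simp
  define u where "u = (\<lambda>n. f n - g n)"
  have uH: "u \<in> H2" unfolding u_def by (rule fd[OF gM])
  have RI0: "RI u h = 0" if hM: "h \<in> M" for h
  proof -
    have hH: "h \<in> H2" using hM MH by auto
    have "(RI u h)\<^sup>2 \<le> 0 * nsq h"
    proof (rule quad_lemma)
      show "0 \<le> nsq h" by (rule nsq_nonneg[OF hH])
      fix t
      have aM: "(\<lambda>n. g n + t *\<^sub>R h n) \<in> M" by (intro add gM scalR hM)
      have "nsq u \<le> nsq (\<lambda>n. f n - (g n + t *\<^sub>R h n))" unfolding u_def by (rule gmin[OF aM])
      also have "(\<lambda>n. f n - (g n + t *\<^sub>R h n)) = (\<lambda>n. u n - t *\<^sub>R h n)" unfolding u_def by auto
      also have "nsq \<dots> = nsq u - 2 * t * RI u h + t\<^sup>2 * nsq h"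
        using nsq_diff[OF uH H2_scaleR[OF hH, of t]] RI_scaleR[OF uH hH, of t] nsq_scaleR[OF hH, of t] by simp
      finally show "0 \<le> 0 - 2 * t * RI u h + t\<^sup>2 * nsq h" by simp
    qed
    thus ?thesis by simp
  qed
  have "\<forall>h\<in>M. h2_inner u h = 0"
  proof
    fix h assume hM: "h \<in> M"
    have ihM: "(\<lambda>n. \<i> *s h n) \<in> M" by (rule scal[OF hM])
    show "h2_inner u h = 0"
      by (rule orth_from_RI[OF uH]) (use hM ihM MH RI0 in auto)
  qed
  thus ?thesis using gM unfolding u_def by blast
qed

lemma h2_inner_diff_left:
  assumes "a \<in> H2" "b \<in> H2" "c \<in> H2"
  shows "h2_inner (\<lambda>n. a n - b n) c = h2_inner a c - h2_inner b c"
proof -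
  have "(\<lambda>n. vi (a n - b n) (c n)) = (\<lambda>n. vi (a n) (c n) - vi (b n) (c n))"
    by (intro ext) (simp add: algebra_simps sum_subtractf)
  thus ?thesis unfolding h2_inner_def
    using suminf_diff[OF summable_vi[OF assms(1,3)] summable_vi[OF assms(2,3)]] by simp
qed

lemma RI_self: "RI w w = nsq w"
  by (simp add: RI_def nsq_def power2_norm_eq_inner)

lemma oproj_char:
  assumes NH: "N \<subseteq> H2" and Nsub: "\<forall>a\<in>N. \<forall>b\<in>N. (\<lambda>n. a n - b n) \<in> N"
    and f: "f \<in> H2" and g: "g \<in> N" and orth: "\<forall>h\<in>N. h2_inner (\<lambda>n. f n - g n) h = 0"
  shows "oproj N f = g"
  unfolding oproj_def
proof (rule the_equality)
  show "g \<in> N \<and> (\<forall>h\<in>N. h2_inner (\<lambda>n. f n - g n) h = 0)" using g orth by blast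
  fix g' assume g': "g' \<in> N \<and> (\<forall>h\<in>N. h2_inner (\<lambda>n. f n - g' n) h = 0)"
  define w where "w = (\<lambda>n. g n - g' n)"
  have wN: "w \<in> N" unfolding w_def using Nsub g g' by blast
  have gH: "g \<in> H2" "g' \<in> H2" "w \<in> H2" using NH g g' wN by auto
  have fg: "(\<lambda>n. f n - g n) \<in> H2" "(\<lambda>n. f n - g' n) \<in> H2" using f gH by (auto intro: H2_diff)
  have "(\<lambda>n. (f n - g' n) - (f n - g n)) = w" unfolding w_def by auto
  hence "h2_inner w w = h2_inner (\<lambda>n. f n - g' n) w - h2_inner (\<lambda>n. f n - g n) w"
    using h2_inner_diff_left[OF fg(2) fg(1) gH(3)] by simp
  also have "\<dots> = 0" using g' orth wN by simp
  finally have "RI w w = 0" using Re_h2_inner[OF gH(3) gH(3)] by simp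
  hence n0: "nsq w = 0" by (simp add: RI_self)
  have "w n = 0" for n using term_le_nsq[OF gH(3), of n] n0 by simp
  thus "g' = g" unfolding w_def by (auto simp: fun_eq_iff)
qed

lemma adjoint: assumes "a \<in> H2" "b \<in> H2"
  shows "h2_inner (bshift a) b = h2_inner a (shift b)"
proof -
  have s: "summable (\<lambda>n. vi (a n) (shift b n))" by (rule summable_vi[OF assms(1) H2_shift[OF assms(2)]])
  have "h2_inner a (shift b) = (\<Sum>n. vi (a (Suc n)) (shift b (Suc n)))"
    unfolding h2_inner_def using suminf_split_head[OF s] by (simp add: shift_def)
  also have "\<dots> = h2_inner (bshift a) b" unfolding h2_inner_def by (simp add: shift_def bshift_def)
  finally show ?thesis by simp
qed

lemma point_H2: "(\<lambda>n. if n = 0 then v else 0) \<in> H2"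
  unfolding H2_iff by (rule summable_finite[of "{0}"]) auto

theorem lemma4p2:
  fixes M :: "('p::finite) h2seq set"
  assumes "h2_closed_subspace M"
    and "bshift ` M \<subseteq> M"
    and "ker_bshift \<subseteq> M"
  shows "(\<forall>f\<in>H2. R_M M f = bshift (P_M M (shift f))) \<and>
         (\<forall>f\<in>H2. R_M M (bshift f) = bshift (P_M M f)) \<and>
         (\<forall>f\<in>H2. Q_M M f = P_M M (shift f))"
proof -
  have MH: "M \<subseteq> H2"
    and add: "\<And>a b. a \<in> M \<Longrightarrow> b \<in> M \<Longrightarrow> (\<lambda>n. a n + b n) \<in> M"
    and scal: "\<And>c a. a \<in> M \<Longrightarrow> (\<lambda>n. c *s a n) \<in> M"
    using assms(1) unfolding h2_closed_subspace_def by blast+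
  have sub: "(\<lambda>n. a n - b n) \<in> M" if "a \<in> M" "b \<in> M" for a b
  proof -
    have "(\<lambda>n. a n + (-1) *s b n) \<in> M" by (intro add scal that)
    moreover have "(\<lambda>n. a n + (-1) *s b n) = (\<lambda>n. a n - b n)" by (auto simp: vec_eq_iff)
    ultimately show ?thesis by simp
  qed
  define N where "N = bshift ` M"
  have NH: "N \<subseteq> H2" unfolding N_def using MH H2_bshift by auto
  have Nsub: "\<forall>a\<in>N. \<forall>b\<in>N. (\<lambda>n. a n - b n) \<in> N"
  proof (intro ballI)
    fix a b assume "a \<in> N" "b \<in> N"
    then obtain a' b' where "a' \<in> M" "b' \<in> M" "a = bshift a'" "b = bshift b'" unfolding N_def by auto
    moreover have "(\<lambda>n. bshift a' n - bshift b' n) = bshift (\<lambda>n. a' n - b' n)" by (simp add: bshift_def)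
    ultimately show "(\<lambda>n. a n - b n) \<in> N" unfolding N_def using sub by auto
  qed
  have shiftN: "shift h \<in> M" if hN0: "h \<in> N" for h
  proof -
    obtain m where m: "m \<in> M" "h = bshift m" using hN0 unfolding N_def by auto
    define c where "c = (\<lambda>n::nat. if n = 0 then m 0 else 0)"
    have "c \<in> ker_bshift" unfolding c_def ker_bshift_def using point_H2 by (auto simp: bshift_def)
    hence cM: "c \<in> M" using assms(3) by auto
    have "shift h = (\<lambda>n. m n - c n)" unfolding m c_def by (auto simp: shift_def bshift_def fun_eq_iff)
    thus ?thesis using sub[OF m(1) cM] by simp
  qed
  have Pprop: "P_M M x \<in> M \<and> (\<forall>h\<in>M. h2_inner (\<lambda>n. x n - P_M M x n) h = 0)" if xH: "x \<in> H2" for x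
  proof -
    obtain g where g: "g \<in> M" "\<forall>h\<in>M. h2_inner (\<lambda>n. x n - g n) h = 0"
      using proj_exists[OF assms(1) xH] by blast
    have "P_M M x = g" unfolding P_M_def
      by (rule oproj_char[OF MH _ xH g]) (use sub in auto)
    thus ?thesis using g by simp
  qed
  have R1: "R_M M f = bshift (P_M M (shift f))" if f: "f \<in> H2" for f
  proof -
    define g where "g = P_M M (shift f)"
    have g: "g \<in> M" "\<forall>h\<in>M. h2_inner (\<lambda>n. shift f n - g n) h = 0"
      using Pprop[OF H2_shift[OF f]] unfolding g_def by auto
    have gH: "g \<in> H2" using g MH by auto
    have aH: "(\<lambda>n. shift f n - g n) \<in> H2" by (intro H2_diff H2_shift f gH)
    have "R_M M f = bshift g" unfolding R_M_def N_def[symmetric]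
    proof (rule oproj_char[OF NH Nsub f])
      show "bshift g \<in> N" unfolding N_def using g by auto
      show "\<forall>h\<in>N. h2_inner (\<lambda>n. f n - bshift g n) h = 0"
      proof
        fix h assume hN: "h \<in> N"
        have "(\<lambda>n. f n - bshift g n) = bshift (\<lambda>n. shift f n - g n)"
          by (simp add: bshift_def shift_def)
        hence "h2_inner (\<lambda>n. f n - bshift g n) h = h2_inner (\<lambda>n. shift f n - g n) (shift h)"
          using adjoint[OF aH, of h] hN NH by auto
        also have "\<dots> = 0" using g shiftN[OF hN] by auto
        finally show "h2_inner (\<lambda>n. f n - bshift g n) h = 0" .
      qed
    qed
    thus ?thesis unfolding g_def .
  qed
  have R2: "R_M M (bshift f) = bshift (P_M M f)" if f: "f \<in> H2" for f
  proof -
    define g where "g = P_M M f"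
    have g: "g \<in> M" "\<forall>h\<in>M. h2_inner (\<lambda>n. f n - g n) h = 0"
      using Pprop[OF f] unfolding g_def by auto
    have gH: "g \<in> H2" using g MH by auto
    have aH: "(\<lambda>n. f n - g n) \<in> H2" by (intro H2_diff f gH)
    have "R_M M (bshift f) = bshift g" unfolding R_M_def N_def[symmetric]
    proof (rule oproj_char[OF NH Nsub H2_bshift[OF f]])
      show "bshift g \<in> N" unfolding N_def using g by auto
      show "\<forall>h\<in>N. h2_inner (\<lambda>n. bshift f n - bshift g n) h = 0"
      proof
        fix h assume hN: "h \<in> N"
        have "(\<lambda>n. bshift f n - bshift g n) = bshift (\<lambda>n. f n - g n)"
          by (simp add: bshift_def)
        hence "h2_inner (\<lambda>n. bshift f n - bshift g n) h = h2_inner (\<lambda>n. f n - g n) (shift h)"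
          using adjoint[OF aH, of h] hN NH by auto
        also have "\<dots> = 0" using g shiftN[OF hN] by auto
        finally show "h2_inner (\<lambda>n. bshift f n - bshift g n) h = 0" .
      qed
    qed
    thus ?thesis unfolding g_def .
  qed
  have R3: "Q_M M f = P_M M (shift f)" if f: "f \<in> H2" for f
  proof -
    define g where "g = P_M M (shift f)"
    have g: "g \<in> M" "\<forall>h\<in>M. h2_inner (\<lambda>n. shift f n - g n) h = 0"
      using Pprop[OF H2_shift[OF f]] unfolding g_def by auto
    define e where "e = (\<lambda>n::nat. if n = 0 then g 0 else 0)"
    have "e \<in> ker_bshift" unfolding e_def ker_bshift_def using point_H2 by (auto simp: bshift_def)
    hence eM: "e \<in> M" using assms(3) by auto
    have "h2_inner (\<lambda>n. shift f n - g n) e = vi (shift f 0 - g 0) (e 0)"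
      unfolding h2_inner_def by (subst suminf_finite[of "{0}"]) (auto simp: e_def)
    also have "\<dots> = - vi (g 0) (g 0)" by (simp add: e_def shift_def sum_negf)
    also have "\<dots> = - of_real ((norm (g 0))\<^sup>2)" by (simp only: vi_self)
    finally have "(norm (g 0))\<^sup>2 = 0" using g(2) eM by simp
    hence g0: "g 0 = 0" by simp
    have "shift (bshift g) = g" using g0 by (auto simp: shift_def bshift_def fun_eq_iff)
    thus ?thesis unfolding Q_M_def R1[OF f] g_def[symmetric] .
  qed
  show ?thesis using R1 R2 R3 by blast
qed

end
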